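(* Let $G$ be a random $(d_1,d_2)$-biregular bipartite graph with $d_2\leq d_1\leq n^{1/3}$. There is an absolute constant $c_1>0$ such that (for $n$ large enough): (1) If $H$ is a subgraph of $K_{n,m}$ in which every vertex has degree at least $2$, with $e$ edges where $e=o(n^{1/3})$, then $\mathbb P(H\subseteq G)\leq c_1\left(\frac{(d_1-1)(d_2-1)}{nm}\right)^{e/2}$. (2) If $\alpha$ is a cycle of length $2k$ in $K_{n,m}$ with $k\leq n^{1/10}$, then $\mathbb P(\alpha\subseteq G)\leq c_1\left(\frac{(d_1-1)(d_2-1)}{nm}\right)^{k}$. (3) If moreover $\beta$ is another cycle of length $2j\leq 2n^{1/10}$ in $K_{n,m}$ and $\alpha,\beta$ share $f$ edges, then $\mathbb P(\alpha\cup\beta\subseteq G)\leq c_1\left(\frac{(d_1-1)(d_2-1)}{nm}\right)^{j+k-f/2}$.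
   Context: A $(d_1,d_2)$-biregular bipartite graph on $V_1=[n]$, $V_2=[m]$ is a simple bipartite graph with all vertices in $V_1$ of degree $d_1$ and all in $V_2$ of degree $d_2$ ($nd_1=md_2$); a random one is chosen uniformly among all such. $K_{n,m}$ is the complete bipartite graph on $V_1\cup V_2$. Cycles are simple cycles. *)

theory Defs
  imports "HOL-Probability.Probability" "HOL-Library.Landau_Symbols"
begin

text \<open>Bipartite graphs on V1 = {1..n}, V2 = {1..m} are represented by their edge sets,
  a set of pairs (i,j) with i in V1 and j in V2; K_{n,m} has edge set {1..n} \<times> {1..m}.\<close>

definition biregular :: "nat \<Rightarrow> nat \<Rightarrow> nat \<Rightarrow> nat \<Rightarrow> (nat \<times> nat) set \<Rightarrow> bool" where
  "biregular n m d1 d2 G \<longleftrightarrow>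
     G \<subseteq> {1..n} \<times> {1..m} \<and>
     (\<forall>i\<in>{1..n}. card {j. (i, j) \<in> G} = d1) \<and>
     (\<forall>j\<in>{1..m}. card {i. (i, j) \<in> G} = d2)"

definition biregular_graphs :: "nat \<Rightarrow> nat \<Rightarrow> nat \<Rightarrow> nat \<Rightarrow> (nat \<times> nat) set set" where
  "biregular_graphs n m d1 d2 = {G. biregular n m d1 d2 G}"

definition random_biregular :: "nat \<Rightarrow> nat \<Rightarrow> nat \<Rightarrow> nat \<Rightarrow> (nat \<times> nat) set pmf" where
  "random_biregular n m d1 d2 = pmf_of_set (biregular_graphs n m d1 d2)"

definition min_deg2_subgraph :: "nat \<Rightarrow> nat \<Rightarrow> (nat \<times> nat) set \<Rightarrow> bool" where
  "min_deg2_subgraph n m H \<longleftrightarrow>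
     H \<subseteq> {1..n} \<times> {1..m} \<and>
     (\<forall>(i, j)\<in>H. 2 \<le> card {j'. (i, j') \<in> H} \<and> 2 \<le> card {i'. (i', j) \<in> H})"

text \<open>Edge set of a (simple) cycle of length 2k in K_{n,m}:
  a_0 b_0 a_1 b_1 ... a_{k-1} b_{k-1} a_0 with distinct a's in V1 and distinct b's in V2.\<close>
definition bip_cycle :: "nat \<Rightarrow> nat \<Rightarrow> nat \<Rightarrow> (nat \<times> nat) set \<Rightarrow> bool" where
  "bip_cycle n m k C \<longleftrightarrow> 2 \<le> k \<and>
     (\<exists>a b. inj_on a {..<k} \<and> inj_on b {..<k} \<and>
        a ` {..<k} \<subseteq> {1..n} \<and> b ` {..<k} \<subseteq> {1..m} \<and>
        C = (\<lambda>i. (a i, b i)) ` {..<k} \<union> (\<lambda>i. (a (Suc i mod k), b i)) ` {..<k})"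

end

theory Submission
  imports Defs "HOL-Real_Asymp.Real_Asymp"
begin


lemma card_ins_rem:
  assumes "finite R" "y \<in> R" "b \<notin> R"
  shows "card (insert b (R - {y})) = card R"
proof -
  have "card R > 0" using assms card_gt_0_iff by blast
  then show ?thesis using assms by (simp add: card_Diff_singleton)
qed

definition sw :: "nat \<Rightarrow> nat \<Rightarrow> (nat \<times> nat) set \<Rightarrow> nat \<times> nat \<Rightarrow> (nat \<times> nat) set" where
  "sw x y G p = (G - {(x,y), p}) \<union> {(x, snd p), (fst p, y)}"

lemma row_sw:
  assumes "a \<noteq> x"
  shows "{j. (i,j) \<in> sw x y G (a,b)} =
    (if i = x then insert b ({j. (x,j)\<in>G} - {y}) else if i = a then insert y ({j. (a,j)\<in>G} - {b})
     else {j. (i,j)\<in>G})"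
  using assms unfolding sw_def by auto

lemma col_sw:
  assumes "b \<noteq> y"
  shows "{i. (i,j) \<in> sw x y G (a,b)} =
    (if j = y then insert a ({i. (i,y)\<in>G} - {x}) else if j = b then insert x ({i. (i,b)\<in>G} - {a})
     else {i. (i,j)\<in>G})"
  using assms unfolding sw_def by auto

lemma row_finite: "(G::(nat\<times>nat) set) \<subseteq> {1..n} \<times> {1..m} \<Longrightarrow> finite {j. (i,j) \<in> G}"
  by (rule finite_subset[of _ "{1..m}"]) auto

lemma col_finite: "(G::(nat\<times>nat) set) \<subseteq> {1..n} \<times> {1..m} \<Longrightarrow> finite {i. (i,j) \<in> G}"
  by (rule finite_subset[of _ "{1..n}"]) auto

lemma sw_biregular:
  assumes bg: "biregular n m d1 d2 G" and xy: "(x,y)\<in>G" and ab: "(a,b)\<in>G" and "(a,y)\<notin>G" "(x,b)\<notin>G"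
    "a \<noteq> x" "b \<noteq> y"
  shows "biregular n m d1 d2 (sw x y G (a,b))"
proof -
  have sub: "G \<subseteq> {1..n} \<times> {1..m}" using bg by (simp add: biregular_def)
  have rows: "\<And>i. i\<in>{1..n} \<Longrightarrow> card {j. (i,j) \<in> G} = d1" and
       cols: "\<And>j. j\<in>{1..m} \<Longrightarrow> card {i. (i,j) \<in> G} = d2" using bg by (auto simp: biregular_def)
  have s1: "sw x y G (a,b) \<subseteq> {1..n} \<times> {1..m}" using sub xy ab unfolding sw_def by auto
  have s2: "card {j. (i,j) \<in> sw x y G (a,b)} = d1" if "i \<in> {1..n}" for i
  proof -
    have "card {j. (i,j) \<in> sw x y G (a,b)} = card {j. (i,j) \<in> G}"
    proof (cases "i = x")
      case True then show ?thesis unfolding row_sw[OF \<open>a \<noteq> x\<close>]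
        using card_ins_rem[of "{j. (x,j)\<in>G}" y b] row_finite[OF sub] assms by simp
    next
      case False then show ?thesis
      proof (cases "i = a")
        case True then show ?thesis unfolding row_sw[OF \<open>a \<noteq> x\<close>]
          using card_ins_rem[of "{j. (a,j)\<in>G}" b y] row_finite[OF sub] assms by simp
      qed (simp add: row_sw[OF \<open>a \<noteq> x\<close>])
    qed
    then show ?thesis using rows that by simp
  qed
  have s3: "card {i. (i,j) \<in> sw x y G (a,b)} = d2" if "j \<in> {1..m}" for j
  proof -
    have "card {i. (i,j) \<in> sw x y G (a,b)} = card {i. (i,j) \<in> G}"
    proof (cases "j = y")
      case True then show ?thesis unfolding col_sw[OF \<open>b \<noteq> y\<close>]
        using card_ins_rem[of "{i. (i,y)\<in>G}" x a] col_finite[OF sub] assms by simp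
    next
      case False then show ?thesis
      proof (cases "j = b")
        case True then show ?thesis unfolding col_sw[OF \<open>b \<noteq> y\<close>]
          using card_ins_rem[of "{i. (i,b)\<in>G}" a x] col_finite[OF sub] assms by simp
      qed (simp add: col_sw[OF \<open>b \<noteq> y\<close>])
    qed
    then show ?thesis using cols that by simp
  qed
  show ?thesis using s1 s2 s3 by (simp add: biregular_def)
qed

lemma card_biregular:
  assumes "biregular n m d1 d2 G" shows "card G = n * d1"
proof -
  have sub: "G \<subseteq> {1..n} \<times> {1..m}" using assms by (simp add: biregular_def)
  have "G = Sigma {1..n} (\<lambda>i. {j. (i,j)\<in>G})" using sub by auto
  then have "card G = (\<Sum>i\<in>{1..n}. card {j. (i,j)\<in>G})"
    using row_finite[OF sub] by (metis card_SigmaI finite_atLeastAtMost)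
  also have "\<dots> = (\<Sum>i\<in>{1..n}. d1)" using assms by (auto simp: biregular_def)
  finally show ?thesis by simp
qed

lemma finite_graphs: "finite (biregular_graphs n m d1 d2)"
  by (rule finite_subset[of _ "Pow ({1..n} \<times> {1..m})"]) (auto simp: biregular_graphs_def biregular_def)




lemma switch:
  fixes F :: "(nat\<times>nat) set"
  assumes Fsub: "F \<subseteq> {1..n} \<times> {1..m}" and x: "x \<in> {1..n}" and y: "y \<in> {1..m}" and xyF: "(x,y) \<notin> F"
  shows "card {G \<in> biregular_graphs n m d1 d2. insert (x,y) F \<subseteq> G} * (n*d1 - (card F + d1 + d2 + 2*d1*d2))
     \<le> card {G \<in> biregular_graphs n m d1 d2. F \<subseteq> G} * ((d2 - card {i. (i,y)\<in>F}) * (d1 - card {j. (x,j)\<in>F}))"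
proof -
  define A where "A = {G \<in> biregular_graphs n m d1 d2. insert (x,y) F \<subseteq> G}"
  define SF where "SF = {G \<in> biregular_graphs n m d1 d2. F \<subseteq> G}"
  define L where "L = n*d1 - (card F + d1 + d2 + 2*d1*d2)"
  define val where "val G = {p \<in> G. p \<notin> F \<and> fst p \<noteq> x \<and> snd p \<noteq> y \<and> (fst p, y) \<notin> G \<and> (x, snd p) \<notin> G}" for G
  define T where "T = Sigma A val"
  define Tgt where "Tgt = Sigma SF (\<lambda>G'. ({i. (i,y)\<in>G'} - {i. (i,y)\<in>F}) \<times> ({j. (x,j)\<in>G'} - {j. (x,j)\<in>F}))"
  define \<phi> where "\<phi> = (\<lambda>(G::(nat\<times>nat) set,p::nat\<times>nat). (sw x y G p, p))"
  have finA: "finite A" unfolding A_def using finite_graphs by auto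
  have finSF: "finite SF" unfolding SF_def using finite_graphs by auto
  have bA: "biregular n m d1 d2 G" if "G \<in> A" for G using that by (simp add: A_def biregular_graphs_def)
  have bSF: "biregular n m d1 d2 G" if "G \<in> SF" for G using that by (simp add: SF_def biregular_graphs_def)
  have subG: "G \<subseteq> {1..n} \<times> {1..m}" if "biregular n m d1 d2 G" for G using that by (simp add: biregular_def)
  have rowG: "card {j. (i,j)\<in>G} = d1" if "biregular n m d1 d2 G" "i \<in> {1..n}" for G i
    using that by (simp add: biregular_def)
  have colG: "card {i. (i,j)\<in>G} = d2" if "biregular n m d1 d2 G" "j \<in> {1..m}" for G j
    using that by (simp add: biregular_def)
  have finG: "finite G" if "biregular n m d1 d2 G" for G
    using subG[OF that] finite_subset by blast
  have finF: "finite F" using Fsub finite_subset by blast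
  have lowval: "L \<le> card (val G)" if GA: "G \<in> A" for G
  proof -
    have bG: "biregular n m d1 d2 G" using bA GA .
    let ?row = "\<lambda>i. {j. (i,j)\<in>G}" and ?col = "\<lambda>j. {i. (i,j)\<in>G}"
    define X where "X = F \<union> Sigma {x} ?row \<union> Sigma (?col y) (\<lambda>_. {y}) \<union> Sigma (?col y) ?row
       \<union> ((\<lambda>(b,a). (a,b)) ` Sigma (?row x) ?col)"
    have "G - X \<subseteq> val G" unfolding X_def val_def by auto
    have fr: "finite (?row i)" for i using row_finite[OF subG[OF bG]] .
    have fc: "finite (?col j)" for j using col_finite[OF subG[OF bG]] .
    have colsub: "?col y \<subseteq> {1..n}" using subG[OF bG] by auto
    have rowsub: "?row x \<subseteq> {1..m}" using subG[OF bG] by auto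
    have c1: "card (Sigma {x} ?row) = d1" using rowG[OF bG x] fr by simp
    have c2: "card (Sigma (?col y) (\<lambda>_. {y})) = d2" using colG[OF bG y] fc by simp
    have c3: "card (Sigma (?col y) ?row) = d2 * d1"
    proof -
      have "card (Sigma (?col y) ?row) = (\<Sum>i\<in>?col y. card (?row i))" using fc fr by simp
      also have "\<dots> = (\<Sum>i\<in>?col y. d1)" using rowG[OF bG] colsub by (intro sum.cong) auto
      finally show ?thesis using colG[OF bG y] by simp
    qed
    have c4: "card ((\<lambda>(b,a). (a,b)) ` Sigma (?row x) ?col) \<le> d1 * d2"
    proof -
      have "card ((\<lambda>(b,a). (a,b)) ` Sigma (?row x) ?col) \<le> card (Sigma (?row x) ?col)" 
        by (rule card_image_le) (use fr fc in simp)
      also have "card (Sigma (?row x) ?col) = (\<Sum>j\<in>?row x. card (?col j))" using fc fr by simp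
      also have "\<dots> = (\<Sum>j\<in>?row x. d2)" using colG[OF bG] rowsub by (intro sum.cong) auto
      finally show ?thesis using rowG[OF bG x] by simp
    qed
    have "card X \<le> card F + d1 + d2 + d2*d1 + d1*d2"
    proof -
      have "card X \<le> card F + card (Sigma {x} ?row) + card (Sigma (?col y) (\<lambda>_. {y})) + card (Sigma (?col y) ?row)
       + card ((\<lambda>(b,a). (a,b)) ` Sigma (?row x) ?col)"
        unfolding X_def by (rule order_trans[OF card_Un_le] add_mono order_refl)+
      then show ?thesis using c1 c2 c3 c4 by linarith
    qed
    moreover have "card G = n * d1" using card_biregular[OF bG] .
    moreover have "card G - card X \<le> card (G - X)" by (rule diff_card_le_card_Diff) (simp add: X_def fr fc finF)
    moreover have "card (G - X) \<le> card (val G)"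
      using \<open>G - X \<subseteq> val G\<close> finG[OF bG] by (intro card_mono) (auto simp: val_def)
    ultimately show ?thesis unfolding L_def by (simp add: algebra_simps)
  qed
  have finval: "finite (val G)" if "G \<in> A" for G using finG[OF bA[OF that]] by (simp add: val_def)
  have "card A * L \<le> card T"
  proof -
    have "card T = (\<Sum>G\<in>A. card (val G))" unfolding T_def using finA finval by simp
    moreover have "card A * L \<le> (\<Sum>G\<in>A. card (val G))" using sum_bounded_below[of A L "\<lambda>G. card (val G)"] lowval
      by (simp add: mult.commute)
    ultimately show ?thesis by simp
  qed
  also have "card T \<le> card Tgt"
  proof (rule card_inj_on_le)
    show "inj_on \<phi> T"
    proof (rule inj_onI)
      fix u v assume u: "u \<in> T" and v: "v \<in> T" and e: "\<phi> u = \<phi> v"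
      obtain G p where up: "u = (G, p)" by (cases u)
      obtain G' p' where vp: "v = (G', p')" by (cases v)
      obtain a b where p: "p = (a,b)" by (cases p)
      have pp: "p' = p" using e unfolding up vp \<phi>_def by simp
      have sws: "sw x y G p = sw x y G' p" using e unfolding up vp \<phi>_def pp by simp
      have rec: "H = (sw x y H (a,b) - {(x,b),(a,y)}) \<union> {(x,y),(a,b)}" if "H \<in> A" "(a,b) \<in> val H" for H
        using that unfolding A_def val_def sw_def by auto
      have m1: "G \<in> A" "(a,b) \<in> val G" using u unfolding up p T_def by auto
      have m2: "G' \<in> A" "(a,b) \<in> val G'" using v unfolding vp pp p T_def by auto
      have "G = G'" using rec[OF m1] rec[OF m2] sws unfolding p by metis
      then show "u = v" using up vp pp by simp
    qed
    show "\<phi> ` T \<subseteq> Tgt"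
    proof
      fix w assume "w \<in> \<phi> ` T"
      then obtain G a b where GA: "G \<in> A" and ab: "(a,b) \<in> val G" and w: "w = (sw x y G (a,b), (a,b))"
        unfolding T_def \<phi>_def by auto
      have bG: "biregular n m d1 d2 G" using bA GA .
      have xyG: "(x,y) \<in> G" "F \<subseteq> G" using GA by (auto simp: A_def)
      have bG': "biregular n m d1 d2 (sw x y G (a,b))"
        using sw_biregular[OF bG xyG(1)] ab by (simp add: val_def)
      have "F \<subseteq> sw x y G (a,b)" using xyG ab xyF unfolding sw_def val_def by auto
      then have "sw x y G (a,b) \<in> SF" using bG' by (simp add: SF_def biregular_graphs_def)
      moreover have "a \<in> {i. (i,y)\<in>sw x y G (a,b)} - {i. (i,y)\<in>F}" using ab xyG unfolding sw_def val_def by auto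
      moreover have "b \<in> {j. (x,j)\<in>sw x y G (a,b)} - {j. (x,j)\<in>F}" using ab xyG unfolding sw_def val_def by auto
      ultimately show "w \<in> Tgt" unfolding w Tgt_def by auto
    qed
    show "finite Tgt" unfolding Tgt_def using finSF
      by (intro finite_SigmaI finite_cartesian_product finite_Diff) (auto intro: col_finite[OF subG[OF bSF]] row_finite[OF subG[OF bSF]])
  qed
  also have "card Tgt = card SF * ((d2 - card {i. (i,y)\<in>F}) * (d1 - card {j. (x,j)\<in>F}))"
  proof -
    have "card Tgt = (\<Sum>G'\<in>SF. card (({i. (i,y)\<in>G'} - {i. (i,y)\<in>F}) \<times> ({j. (x,j)\<in>G'} - {j. (x,j)\<in>F})))"
      unfolding Tgt_def using finSF
      by (subst card_SigmaI) (auto intro!: finite_cartesian_product finite_Diff col_finite[OF subG[OF bSF]] row_finite[OF subG[OF bSF]])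
    also have "\<dots> = (\<Sum>G'\<in>SF. (d2 - card {i. (i,y)\<in>F}) * (d1 - card {j. (x,j)\<in>F}))"
    proof (rule sum.cong[OF refl])
      fix G' assume G': "G' \<in> SF"
      have b: "biregular n m d1 d2 G'" using bSF G' .
      have FG: "F \<subseteq> G'" using G' by (simp add: SF_def)
      have "card ({i. (i,y)\<in>G'} - {i. (i,y)\<in>F}) = d2 - card {i. (i,y)\<in>F}"
        using colG[OF b y] col_finite[OF Fsub] FG by (subst card_Diff_subset) auto
      moreover have "card ({j. (x,j)\<in>G'} - {j. (x,j)\<in>F}) = d1 - card {j. (x,j)\<in>F}"
        using rowG[OF b x] row_finite[OF Fsub] FG by (subst card_Diff_subset) auto
      ultimately show "card (({i. (i,y)\<in>G'} - {i. (i,y)\<in>F}) \<times> ({j. (x,j)\<in>G'} - {j. (x,j)\<in>F}))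
          = (d2 - card {i. (i,y)\<in>F}) * (d1 - card {j. (x,j)\<in>F})" by (simp add: card_cartesian_product)
    qed
    finally show ?thesis by simp
  qed
  finally show ?thesis unfolding A_def SF_def L_def .
qed




definition ff :: "nat \<Rightarrow> nat \<Rightarrow> nat" where "ff d t = (\<Prod>r<t. d - r)"

definition QQ :: "nat \<Rightarrow> nat \<Rightarrow> nat \<Rightarrow> nat \<Rightarrow> (nat\<times>nat) set \<Rightarrow> nat" where
  "QQ n m d1 d2 H = (\<Prod>i\<in>{1..n}. ff d1 (card {j. (i,j)\<in>H})) * (\<Prod>j\<in>{1..m}. ff d2 (card {i. (i,j)\<in>H}))"

lemma ff_Suc: "ff d (Suc t) = ff d t * (d - t)" by (simp add: ff_def)

lemma prod_bump:
  fixes f :: "nat \<Rightarrow> nat"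
  assumes "finite A" "x \<in> A" "\<And>i. i \<in> A \<Longrightarrow> i \<noteq> x \<Longrightarrow> g i = f i" "g x = f x * c"
  shows "prod g A = prod f A * c"
proof -
  have "prod g A = g x * prod g (A - {x})" using assms by (simp add: prod.remove)
  moreover have "prod g (A - {x}) = prod f (A - {x})" using assms by (intro prod.cong) auto
  moreover have "prod f A = f x * prod f (A - {x})" using assms by (simp add: prod.remove)
  ultimately show ?thesis using assms(4) by (simp add: algebra_simps)
qed

lemma QQ_insert:
  fixes H :: "(nat\<times>nat) set"
  assumes Hs: "H \<subseteq> {1..n} \<times> {1..m}" and x: "x \<in> {1..n}" and y: "y \<in> {1..m}" and xy: "(x,y) \<notin> H"
  shows "QQ n m d1 d2 (insert (x,y) H) = QQ n m d1 d2 H * ((d2 - card {i. (i,y)\<in>H}) * (d1 - card {j. (x,j)\<in>H}))"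
proof -
  have r: "(\<Prod>i\<in>{1..n}. ff d1 (card {j. (i,j)\<in>insert (x,y) H})) = (\<Prod>i\<in>{1..n}. ff d1 (card {j. (i,j)\<in>H})) * (d1 - card {j. (x,j)\<in>H})"
  proof (rule prod_bump[OF _ x])
    show "ff d1 (card {j. (x, j) \<in> insert (x, y) H}) = ff d1 (card {j. (x, j) \<in> H}) * (d1 - card {j. (x, j) \<in> H})"
    proof -
      have "{j. (x, j) \<in> insert (x, y) H} = insert y {j. (x, j) \<in> H}" by auto
      then have "card {j. (x, j) \<in> insert (x, y) H} = Suc (card {j. (x, j) \<in> H})"
        using row_finite[OF Hs] xy by simp
      then show ?thesis by (simp add: ff_Suc)
    qed
  next
    fix i assume "i \<noteq> x" then have "{j. (i, j) \<in> insert (x, y) H} = {j. (i, j) \<in> H}" by auto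
    then show "ff d1 (card {j. (i, j) \<in> insert (x, y) H}) = ff d1 (card {j. (i, j) \<in> H})" by simp
  qed simp
  have c: "(\<Prod>j\<in>{1..m}. ff d2 (card {i. (i,j)\<in>insert (x,y) H})) = (\<Prod>j\<in>{1..m}. ff d2 (card {i. (i,j)\<in>H})) * (d2 - card {i. (i,y)\<in>H})"
  proof (rule prod_bump[OF _ y])
    show "ff d2 (card {i. (i,y) \<in> insert (x, y) H}) = ff d2 (card {i. (i,y) \<in> H}) * (d2 - card {i. (i,y) \<in> H})"
    proof -
      have "{i. (i,y) \<in> insert (x, y) H} = insert x {i. (i,y) \<in> H}" by auto
      then have "card {i. (i,y) \<in> insert (x, y) H} = Suc (card {i. (i,y) \<in> H})"
        using col_finite[OF Hs] xy by simp
      then show ?thesis by (simp add: ff_Suc)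
    qed
  next
    fix j assume "j \<noteq> y" then have "{i. (i, j) \<in> insert (x, y) H} = {i. (i, j) \<in> H}" by auto
    then show "ff d2 (card {i. (i, j) \<in> insert (x, y) H}) = ff d2 (card {i. (i, j) \<in> H})" by simp
  qed simp
  show ?thesis unfolding QQ_def r c by (simp add: algebra_simps)
qed

lemma chain:
  fixes H :: "(nat\<times>nat) set"
  assumes "finite H"
  shows "H \<subseteq> {1..n} \<times> {1..m} \<Longrightarrow> card H \<le> e0 \<Longrightarrow>
    card {G \<in> biregular_graphs n m d1 d2. H \<subseteq> G} * (n*d1 - (e0 + d1 + d2 + 2*d1*d2)) ^ card H
     \<le> card (biregular_graphs n m d1 d2) * QQ n m d1 d2 H"
  using assms
proof (induction H rule: finite_induct)
  case empty
  then show ?case by (simp add: QQ_def ff_def)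
next
  case (insert p F)
  obtain x y where p: "p = (x,y)" by (cases p)
  let ?L = "n*d1 - (e0 + d1 + d2 + 2*d1*d2)"
  let ?S = "\<lambda>F. card {G \<in> biregular_graphs n m d1 d2. F \<subseteq> G}"
  let ?D = "(d2 - card {i. (i,y)\<in>F}) * (d1 - card {j. (x,j)\<in>F})"
  have Fs: "F \<subseteq> {1..n} \<times> {1..m}" and x: "x \<in> {1..n}" and y: "y \<in> {1..m}" and xy: "(x,y) \<notin> F"
    using insert p by auto
  have cF: "card F \<le> e0" "card (insert p F) = Suc (card F)" using insert by auto
  have sw: "?S (insert p F) * (n*d1 - (card F + d1 + d2 + 2*d1*d2)) \<le> ?S F * ?D"
    using switch[OF Fs x y xy] p by simp
  have "?S (insert p F) * ?L \<le> ?S (insert p F) * (n*d1 - (card F + d1 + d2 + 2*d1*d2))"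
    using cF by (intro mult_le_mono2) linarith
  with sw have s1: "?S (insert p F) * ?L \<le> ?S F * ?D" by linarith
  have IH: "?S F * ?L ^ card F \<le> card (biregular_graphs n m d1 d2) * QQ n m d1 d2 F"
    using insert cF by auto
  have "?S (insert p F) * ?L ^ card (insert p F) = (?S (insert p F) * ?L) * ?L ^ card F"
    using cF by simp
  also have "\<dots> \<le> (?S F * ?D) * ?L ^ card F" using s1 by (rule mult_le_mono1)
  also have "\<dots> = (?S F * ?L ^ card F) * ?D" by simp
  also have "\<dots> \<le> (card (biregular_graphs n m d1 d2) * QQ n m d1 d2 F) * ?D" using IH by (rule mult_le_mono1)
  also have "\<dots> = card (biregular_graphs n m d1 d2) * QQ n m d1 d2 (insert p F)"
    using QQ_insert[OF Fs x y xy] p by simp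
  finally show ?case .
qed




lemma ff_bound:
  assumes "t \<noteq> 1"
  shows "real (ff d t) \<le> sqrt (real d * (real d - 1)) ^ t"
proof (cases "d = 0")
  case True
  then show ?thesis
  proof (cases t)
    case 0 then show ?thesis by (simp add: ff_def)
  next
    case (Suc t') then show ?thesis using True by (simp add: ff_Suc)
  qed
next
  case False
  define s where "s = sqrt (real d * (real d - 1))"
  have d1: "real d \<ge> 1" using False by simp
  have nn: "0 \<le> real d * (real d - 1)" using d1 by (intro mult_nonneg_nonneg) auto
  have s2: "s^2 = real d * (real d - 1)" unfolding s_def using nn by simp
  have s0: "s \<ge> 0" unfolding s_def using nn by simp
  have ds: "real d - 1 \<le> s" unfolding s_def using d1 nn by (intro real_le_rsqrt) (auto simp add: power2_eq_square intro!: mult_right_mono)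
  have main: "real (ff d t) \<le> s ^ t" if "t \<ge> 2" for t
    using that
  proof (induction t rule: nat_induct_at_least)
    case base
    have "ff d 2 = d * (d - 1)" by (simp add: ff_def numeral_2_eq_2)
    then show ?case using s2 d1 by (simp add: of_nat_diff)
  next
    case (Suc t)
    have "real (ff d (Suc t)) = real (ff d t) * real (d - t)" by (simp add: ff_Suc)
    also have "\<dots> \<le> s ^ t * s"
    proof (rule mult_mono)
      show "real (d - t) \<le> s"
      proof -
        have "real (d - t) \<le> real d - 1" using Suc.hyps d1 by (cases "t \<le> d") (auto simp: of_nat_diff)
        then show ?thesis using ds by linarith
      qed
    qed (use Suc.IH s0 in auto)
    finally show ?case by (simp add: mult.commute)
  qed
  show ?thesis
  proof (cases "t = 0")
    case True then show ?thesis by (simp add: ff_def)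
  next
    case False then have "t \<ge> 2" using assms by linarith
    then show ?thesis using main s_def by simp
  qed
qed

lemma sum_rows:
  fixes H :: "(nat\<times>nat) set"
  assumes "H \<subseteq> {1..n} \<times> {1..m}"
  shows "(\<Sum>i\<in>{1..n}. card {j. (i,j)\<in>H}) = card H"
proof -
  have "H = Sigma {1..n} (\<lambda>i. {j. (i,j)\<in>H})" using assms by auto
  then show ?thesis using row_finite[OF assms] by (metis card_SigmaI finite_atLeastAtMost)
qed

lemma sum_cols:
  fixes H :: "(nat\<times>nat) set"
  assumes "H \<subseteq> {1..n} \<times> {1..m}"
  shows "(\<Sum>j\<in>{1..m}. card {i. (i,j)\<in>H}) = card H"
proof -
  have e: "H = (\<lambda>(j,i). (i,j)) ` Sigma {1..m} (\<lambda>j. {i. (i,j)\<in>H})" using assms by force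
  have "card H = card (Sigma {1..m} (\<lambda>j. {i. (i,j)\<in>H}))"
    by (subst e, rule card_image) (auto simp: inj_on_def)
  then show ?thesis using col_finite[OF assms] by simp
qed

lemma dd_nonneg: "0 \<le> real (d::nat) * (real d - 1)"
  by (cases "d = 0") (auto intro!: mult_nonneg_nonneg)

lemma QQ_bound:
  assumes md: "min_deg2_subgraph n m H"
  shows "real (QQ n m d1 d2 H) \<le> sqrt (real d1 * (real d1 - 1)) ^ card H * sqrt (real d2 * (real d2 - 1)) ^ card H"
proof -
  have Hs: "H \<subseteq> {1..n} \<times> {1..m}" using md by (simp add: min_deg2_subgraph_def)
  have deg: "2 \<le> card {j'. (i, j') \<in> H} \<and> 2 \<le> card {i'. (i', j) \<in> H}" if "(i,j) \<in> H" for i j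
    using md that unfolding min_deg2_subgraph_def by blast
  have r1: "card {j. (i,j)\<in>H} \<noteq> 1" for i
  proof
    assume "card {j. (i,j)\<in>H} = 1"
    then obtain j where "(i,j) \<in> H" by (metis (no_types, lifting) card_1_singletonE insertI1 mem_Collect_eq)
    then show False using deg \<open>card {j. (i,j)\<in>H} = 1\<close> by fastforce
  qed
  have c1: "card {i. (i,j)\<in>H} \<noteq> 1" for j
  proof
    assume "card {i. (i,j)\<in>H} = 1"
    then obtain i where "(i,j) \<in> H" by (metis (no_types, lifting) card_1_singletonE insertI1 mem_Collect_eq)
    then show False using deg \<open>card {i. (i,j)\<in>H} = 1\<close> by fastforce
  qed
  let ?s1 = "sqrt (real d1 * (real d1 - 1))" and ?s2 = "sqrt (real d2 * (real d2 - 1))"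
  have "real (\<Prod>i\<in>{1..n}. ff d1 (card {j. (i,j)\<in>H})) = (\<Prod>i\<in>{1..n}. real (ff d1 (card {j. (i,j)\<in>H})))"
    by simp
  also have "\<dots> \<le> (\<Prod>i\<in>{1..n}. ?s1 ^ card {j. (i,j)\<in>H})"
    by (intro prod_mono) (use ff_bound r1 in auto)
  also have "\<dots> = ?s1 ^ card H" using sum_rows[OF Hs] by (metis power_sum)
  finally have A: "real (\<Prod>i\<in>{1..n}. ff d1 (card {j. (i,j)\<in>H})) \<le> ?s1 ^ card H" .
  have "real (\<Prod>j\<in>{1..m}. ff d2 (card {i. (i,j)\<in>H})) = (\<Prod>j\<in>{1..m}. real (ff d2 (card {i. (i,j)\<in>H})))"
    by simp
  also have "\<dots> \<le> (\<Prod>j\<in>{1..m}. ?s2 ^ card {i. (i,j)\<in>H})"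
    by (intro prod_mono) (use ff_bound c1 in auto)
  also have "\<dots> = ?s2 ^ card H" using sum_cols[OF Hs] by (metis power_sum)
  finally have B: "real (\<Prod>j\<in>{1..m}. ff d2 (card {i. (i,j)\<in>H})) \<le> ?s2 ^ card H" .
  show ?thesis unfolding QQ_def of_nat_mult
    by (rule mult_mono[OF A B]) (auto intro!: prod_nonneg zero_le_power simp: dd_nonneg)
qed




lemma arith_bound:
  fixes e d1 d2 r :: real
  assumes r1: "r \<ge> 1" and e0: "e \<ge> 0" and er: "24 * e \<le> r" and d11: "1 \<le> d1" and d1r: "d1 \<le> r"
    and d2: "0 \<le> d2" "d2 \<le> d1"
  shows "2 * e * (e + d1 + d2 + 2 * d1 * d2) \<le> r^3 * d1"
proof -
  have a: "e * d2 \<le> e * d1" using e0 d2 by (intro mult_left_mono) auto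
  have b: "e * e \<le> e * e * d1" using e0 d11 by (simp add: mult_le_cancel_left1)
  have c: "e * d1 * d2 \<le> e * d1 * r" using e0 d11 d2 d1r by (intro mult_left_mono) auto
  have lhs: "2 * e * (e + d1 + d2 + 2 * d1 * d2) \<le> d1 * (2 * (e * e) + 4 * e + 4 * (e * r))"
    using a b c by (simp add: algebra_simps)
  have ee0: "(24*e) * (24*e) \<le> r * r" using e0 er by (intro mult_mono) auto
  have ee: "e * e \<le> r * r / 576" using ee0 by simp
  have erb0: "(24 * e) * r \<le> r * r" using er r1 by (intro mult_right_mono) auto
  have erb: "e * r \<le> r * r / 24" using erb0 by simp
  have eb0: "r * 1 \<le> r * r" using r1 by (intro mult_left_mono) auto
  have eb: "e \<le> r * r / 24" using eb0 er by simp
  have rr: "r * r \<le> r^3" using r1 by (simp add: power3_eq_cube)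
  have d: "2 * (e * e) + 4 * e + 4 * (e * r) \<le> r^3" using ee erb eb rr mult_nonneg_nonneg[of r r] r1 by linarith
  have "d1 * (2 * (e * e) + 4 * e + 4 * (e * r)) \<le> d1 * r^3" using d d11 by (intro mult_left_mono) auto
  with lhs show ?thesis by (simp add: mult.commute)
qed


lemma x_nonneg:
  assumes "n \<ge> 1" "n * d1 = m * d2" "d2 \<le> d1"
  shows "0 \<le> (real d1 - 1) * (real d2 - 1) / (real n * real m)"
proof (cases "d2 = 0")
  case True
  then have "d1 = 0" using assms by simp
  then show ?thesis using True by simp
next
  case False
  then show ?thesis using assms by (intro divide_nonneg_nonneg mult_nonneg_nonneg) auto
qed

lemma core:
  fixes H :: "(nat\<times>nat) set"
  assumes n1: "n \<ge> 1" and ne: "biregular_graphs n m d1 d2 \<noteq> {}" and eq: "n*d1 = m*d2" and d21: "d2 \<le> d1"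
    and d1r: "real d1 \<le> real n powr (1/3)" and md: "min_deg2_subgraph n m H"
    and eH: "24 * real (card H) \<le> real n powr (1/3)"
  shows "measure_pmf.prob (random_biregular n m d1 d2) {G. H \<subseteq> G}
     \<le> 2 * sqrt ((real d1 - 1) * (real d2 - 1) / (real n * real m)) ^ card H"
proof -
  define GG where "GG = biregular_graphs n m d1 d2"
  define x where "x = (real d1 - 1) * (real d2 - 1) / (real n * real m)"
  define S where "S = card {G\<in>GG. H \<subseteq> G}"
  have finGG: "finite GG" unfolding GG_def by (rule finite_graphs)
  have Hs: "H \<subseteq> {1..n} \<times> {1..m}" using md by (simp add: min_deg2_subgraph_def)
  have finH: "finite H" using Hs finite_subset by blast
  have "GG \<inter> {G. H \<subseteq> G} = {G\<in>GG. H \<subseteq> G}" by auto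
  then have P: "measure_pmf.prob (random_biregular n m d1 d2) {G. H \<subseteq> G} = real S / real (card GG)"
    unfolding random_biregular_def S_def using measure_pmf_of_set[OF ne finite_graphs] GG_def by simp
  have x0: "0 \<le> x" unfolding x_def using x_nonneg[OF n1 eq d21] .
  have rhs0: "0 \<le> 2 * sqrt x ^ card H" using x0 by simp
  show ?thesis
  proof (cases "card H = 0")
    case True
    have "measure_pmf.prob (random_biregular n m d1 d2) {G. H \<subseteq> G} \<le> 1" by (rule measure_pmf.prob_le_1)
    moreover have "2 * sqrt ((real d1 - 1) * (real d2 - 1) / (real n * real m)) ^ card H = 2" using True by simp
    ultimately show ?thesis by linarith
  next
    case Hne: False
    show ?thesis
    proof (cases "d1 = 0")
      case True
      obtain i j where ij: "(i,j) \<in> H"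
      proof -
        from Hne have "H \<noteq> {}" by auto
        then obtain p where "p \<in> H" by blast
        then show thesis using that by (cases p) auto
      qed
      have "{G\<in>GG. H \<subseteq> G} = {}"
      proof (rule ccontr)
        assume "{G\<in>GG. H \<subseteq> G} \<noteq> {}"
        then obtain G where G: "G \<in> GG" "H \<subseteq> G" by blast
        have b: "biregular n m d1 d2 G" using G by (simp add: GG_def biregular_graphs_def)
        have sub: "G \<subseteq> {1..n} \<times> {1..m}" using b by (simp add: biregular_def)
        have i: "i \<in> {1..n}" using ij G sub by auto
        have "card {j. (i,j)\<in>G} = 0" using b i True by (simp add: biregular_def)
        then have "{j. (i,j)\<in>G} = {}" using row_finite[OF sub] by simp
        then show False using ij G by auto
      qed
      then have "S = card ({}::(nat\<times>nat) set set)" unfolding S_def by (rule arg_cong)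
      then have "S = 0" by simp
      then show ?thesis using P rhs0 x_def by simp
    next
      case d1pos: False
      define e where "e = card H"
      define K where "K = e + d1 + d2 + 2*d1*d2"
      define M where "M = n*d1"
      define L where "L = M - K"
      define r where "r = real n powr (1/3)"
      have e1: "e \<ge> 1" using Hne e_def by simp
      have "n * d1 > 0" using n1 d1pos by simp
      then have "m * d2 > 0" using eq by simp
      then have d2pos: "d2 \<ge> 1" and m1: "m \<ge> 1" by auto
      have r1: "r \<ge> 1" unfolding r_def using n1 by (intro ge_one_powr_ge_zero) auto
      have r3: "r^3 = real n" unfolding r_def using n1 by (simp add: powr_power)
      have ab: "2 * real e * (real e + real d1 + real d2 + 2 * real d1 * real d2) \<le> r^3 * real d1"
      proof (rule arith_bound[of r "real e" "real d1" "real d2"])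
        show "1 \<le> r" by (rule r1)
        show "24 * real e \<le> r" using eH unfolding e_def r_def .
        show "real d1 \<le> r" using d1r unfolding r_def .
      qed (use d1pos d21 in auto)
      then have ab': "2 * real e * real K \<le> real M" unfolding K_def M_def r3 by simp
      have M0: "real M > 0" unfolding M_def using n1 d1pos by simp
      have "2 * 1 * real K \<le> 2 * real e * real K" using e1 by (intro mult_right_mono) auto
      then have KM: "2 * real K \<le> real M" using ab' by linarith
      then have KM': "K < M" using M0 by linarith
      have Lr: "real L = real M - real K" unfolding L_def using KM' by (simp add: of_nat_diff)
      have L0: "real L > 0" using Lr KM' by simp
      have ch: "S * L ^ e \<le> card GG * QQ n m d1 d2 H"
        using chain[OF finH Hs order_refl] unfolding S_def GG_def L_def M_def K_def e_def by simp
      have GG0: "card GG > 0" using ne finGG by (simp add: GG_def card_gt_0_iff)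
      have "real S * real L ^ e \<le> real (card GG) * real (QQ n m d1 d2 H)"
      proof -
        have "real (S * L ^ e) \<le> real (card GG * QQ n m d1 d2 H)" using ch by (simp only: of_nat_le_iff)
        then show ?thesis by simp
      qed
      then have P1: "real S / real (card GG) \<le> real (QQ n m d1 d2 H) / real L ^ e"
        using GG0 L0 by (simp add: field_simps)
      define s1 where "s1 = sqrt (real d1 * (real d1 - 1))"
      define s2 where "s2 = sqrt (real d2 * (real d2 - 1))"
      have Qb: "real (QQ n m d1 d2 H) \<le> (s1 * s2) ^ e"
        using QQ_bound[OF md] unfolding s1_def s2_def e_def by (simp add: power_mult_distrib)
      have s12: "s1 * s2 = sqrt x * real M"
      proof -
        have "real (n*d1) = real (m*d2)" using eq by simp
        then have eqr: "real n * real d1 = real m * real d2" by simp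
        have M2: "(real M)^2 = (real n * real d1) * (real m * real d2)"
          unfolding M_def power2_eq_square using eqr by simp
        have nm: "real n * real m \<noteq> 0" using n1 m1 by simp
        have "x * (real M)^2 = ((real d1 - 1) * (real d2 - 1) / (real n * real m)) * ((real n * real m) * (real d1 * real d2))"
          unfolding x_def M2 by (simp add: ac_simps)
        also have "\<dots> = (real d1 - 1) * (real d2 - 1) * (real d1 * real d2)" using nm by simp
        finally have xm: "x * (real M)^2 = real d1 * (real d1 - 1) * (real d2 * (real d2 - 1))" by (simp add: ac_simps)
        have "sqrt x * real M = sqrt x * sqrt ((real M)^2)" using M0 by simp
        also have "\<dots> = sqrt (x * (real M)^2)" by (simp add: real_sqrt_mult)
        finally have "sqrt x * real M = sqrt (real d1 * (real d1 - 1) * (real d2 * (real d2 - 1)))"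
          using xm by simp
        then show ?thesis unfolding s1_def s2_def by (simp add: real_sqrt_mult)
      qed
      have B: "1/2 \<le> (real L / real M) ^ e"
      proof -
        have "-1 \<le> - (real K / real M)" using KM M0 by (simp add: field_simps)
        from Bernoulli_inequality[OF this, of e]
        have bern: "1 + real e * - (real K / real M) \<le> (1 + - (real K / real M)) ^ e" .
        have eqL: "1 + - (real K / real M) = real L / real M" using Lr M0 by (simp add: field_simps)
        have "1 + real e * - (real K / real M) \<le> (real L / real M) ^ e" using bern unfolding eqL .
        moreover have "1/2 \<le> 1 + real e * - (real K / real M)" using ab' M0 by (simp add: field_simps)
        ultimately show ?thesis by linarith
      qed
      have MLb: "(real M / real L) ^ e \<le> 2"
      proof -
        have "(real M / real L) ^ e = 1 / (real L / real M) ^ e" by (simp add: power_divide)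
        also have "\<dots> \<le> 1 / (1/2)" using B by (intro divide_left_mono) auto
        finally show ?thesis by simp
      qed
      have "real (QQ n m d1 d2 H) / real L ^ e \<le> (sqrt x * real M) ^ e / real L ^ e"
        using Qb s12 L0 by (intro divide_right_mono) auto
      with P1 have "real S / real (card GG) \<le> (sqrt x * real M) ^ e / real L ^ e" by linarith
      also have "\<dots> = sqrt x ^ e * (real M / real L) ^ e" by (simp add: power_mult_distrib power_divide)
      also have "\<dots> \<le> sqrt x ^ e * 2" using MLb x0 by (intro mult_left_mono) auto
      finally show ?thesis using P unfolding e_def x_def by (simp add: mult.commute)
    qed
  qed
qed




lemma two_le_card: "finite A \<Longrightarrow> u \<in> A \<Longrightarrow> v \<in> A \<Longrightarrow> u \<noteq> v \<Longrightarrow> 2 \<le> card A"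
proof -
  assume "finite A" "u \<in> A" "v \<in> A" "u \<noteq> v"
  then have "card {u, v} \<le> card A" by (intro card_mono) auto
  then show ?thesis using \<open>u \<noteq> v\<close> by simp
qed

lemma cycle_props:
  assumes "bip_cycle n m k C"
  shows "min_deg2_subgraph n m C \<and> card C = 2 * k"
proof -
  obtain a b where k2: "2 \<le> k" and ia: "inj_on a {..<k}" and ib: "inj_on b {..<k}"
    and ar: "a ` {..<k} \<subseteq> {1..n}" and br: "b ` {..<k} \<subseteq> {1..m}"
    and C: "C = (\<lambda>i. (a i, b i)) ` {..<k} \<union> (\<lambda>i. (a (Suc i mod k), b i)) ` {..<k}"
    using assms unfolding bip_cycle_def by blast
  have sk: "Suc t mod k < k" for t using k2 by simp
  have sne: "Suc t mod k \<noteq> t" if "t < k" for t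
  proof
    assume h: "Suc t mod k = t"
    show False
    proof (cases "Suc t < k")
      case True then show False using h by simp
    next
      case False then have "Suc t = k" using that by simp
      then show False using h k2 by simp
    qed
  qed
  have finC: "finite C" unfolding C by simp
  have Cs: "C \<subseteq> {1..n} \<times> {1..m}" unfolding C using ar br sk by auto
  have pred: "\<exists>s<k. Suc s mod k = t" if "t < k" for t
  proof (cases t)
    case 0 then show ?thesis using k2 by (intro exI[of _ "k - 1"]) auto
  next
    case (Suc t') then show ?thesis using that by (intro exI[of _ t']) auto
  qed
  have deg: "2 \<le> card {j'. (i, j') \<in> C} \<and> 2 \<le> card {i'. (i', j) \<in> C}" if ij: "(i,j) \<in> C" for i j
  proof -
    have fr: "finite {j'. (i, j') \<in> C}" using row_finite[OF Cs] .
    have fc: "finite {i'. (i', j) \<in> C}" using col_finite[OF Cs] .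
    from ij consider (A) t where "t < k" "i = a t" "j = b t" | (B) t where "t < k" "i = a (Suc t mod k)" "j = b t"
      unfolding C by auto
    then show ?thesis
    proof cases
      case A
      obtain s where s: "s < k" "Suc s mod k = t" using pred[OF A(1)] by blast
      have st: "s \<noteq> t" using sne[OF s(1)] s(2) by auto
      have r: "2 \<le> card {j'. (i, j') \<in> C}"
      proof (rule two_le_card[OF fr, of "b t" "b s"])
        show "b t \<in> {j'. (i, j') \<in> C}" using A unfolding C by auto
        have "(a (Suc s mod k), b s) \<in> C" unfolding C using s by auto
        then show "b s \<in> {j'. (i, j') \<in> C}" using A s by simp
        show "b t \<noteq> b s" using ib A(1) s(1) st by (auto dest: inj_onD)
      qed
      have c: "2 \<le> card {i'. (i', j) \<in> C}"
      proof (rule two_le_card[OF fc, of "a t" "a (Suc t mod k)"])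
        show "a t \<in> {i'. (i', j) \<in> C}" using A unfolding C by auto
        show "a (Suc t mod k) \<in> {i'. (i', j) \<in> C}" using A unfolding C by auto
        show "a t \<noteq> a (Suc t mod k)" using ia A(1) sk sne[OF A(1)] by (metis inj_onD lessThan_iff)
      qed
      show ?thesis using r c by simp
    next
      case B
      have r: "2 \<le> card {j'. (i, j') \<in> C}"
      proof (rule two_le_card[OF fr, of "b t" "b (Suc t mod k)"])
        show "b t \<in> {j'. (i, j') \<in> C}" using B unfolding C by auto
        have "(a (Suc t mod k), b (Suc t mod k)) \<in> C" unfolding C using sk by auto
        then show "b (Suc t mod k) \<in> {j'. (i, j') \<in> C}" using B by simp
        show "b t \<noteq> b (Suc t mod k)" using ib B(1) sk sne[OF B(1)] by (metis inj_onD lessThan_iff)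
      qed
      have c: "2 \<le> card {i'. (i', j) \<in> C}"
      proof (rule two_le_card[OF fc, of "a t" "a (Suc t mod k)"])
        show "a t \<in> {i'. (i', j) \<in> C}" using B unfolding C by auto
        show "a (Suc t mod k) \<in> {i'. (i', j) \<in> C}" using B unfolding C by auto
        show "a t \<noteq> a (Suc t mod k)" using ia B(1) sk sne[OF B(1)] by (metis inj_onD lessThan_iff)
      qed
      show ?thesis using r c by simp
    qed
  qed
  have md: "min_deg2_subgraph n m C" unfolding min_deg2_subgraph_def using Cs deg by auto
  have i1: "inj_on (\<lambda>i. (a i, b i)) {..<k}" using ib by (auto simp: inj_on_def)
  have i2: "inj_on (\<lambda>i. (a (Suc i mod k), b i)) {..<k}" using ib by (auto simp: inj_on_def)
  have disj: "(\<lambda>i. (a i, b i)) ` {..<k} \<inter> (\<lambda>i. (a (Suc i mod k), b i)) ` {..<k} = {}"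
  proof (rule ccontr)
    assume "(\<lambda>i. (a i, b i)) ` {..<k} \<inter> (\<lambda>i. (a (Suc i mod k), b i)) ` {..<k} \<noteq> {}"
    then obtain t s where ts: "t < k" "s < k" "a t = a (Suc s mod k)" "b t = b s" by auto
    then have "t = s" using ib by (auto dest: inj_onD)
    then have "a t = a (Suc t mod k)" using ts by simp
    then have "t = Suc t mod k" using ia ts(1) sk by (metis inj_onD lessThan_iff)
    then show False using sne[OF ts(1)] by simp
  qed
  have "card C = k + k" unfolding C
    by (subst card_Un_disjoint) (use disj i1 i2 in \<open>auto simp: card_image\<close>)
  then show ?thesis using md by simp
qed

lemma union_md:
  assumes "min_deg2_subgraph n m A" "min_deg2_subgraph n m B"
  shows "min_deg2_subgraph n m (A \<union> B)"
proof -
  have As: "A \<subseteq> {1..n} \<times> {1..m}" and Bs: "B \<subseteq> {1..n} \<times> {1..m}" using assms by (auto simp: min_deg2_subgraph_def)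
  then have Us: "A \<union> B \<subseteq> {1..n} \<times> {1..m}" by auto
  have "2 \<le> card {j'. (i, j') \<in> A \<union> B} \<and> 2 \<le> card {i'. (i', j) \<in> A \<union> B}" if "(i,j) \<in> A \<union> B" for i j
  proof -
    have fr: "finite {j'. (i, j') \<in> A \<union> B}" using row_finite[OF Us] .
    have fc: "finite {i'. (i', j) \<in> A \<union> B}" using col_finite[OF Us] .
    from that show ?thesis
    proof
      assume "(i,j) \<in> A"
      then have "2 \<le> card {j'. (i, j') \<in> A} \<and> 2 \<le> card {i'. (i', j) \<in> A}" using assms(1) unfolding min_deg2_subgraph_def by blast
      moreover have "card {j'. (i, j') \<in> A} \<le> card {j'. (i, j') \<in> A \<union> B}" using fr by (intro card_mono) auto
      moreover have "card {i'. (i', j) \<in> A} \<le> card {i'. (i', j) \<in> A \<union> B}" using fc by (intro card_mono) auto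
      ultimately show ?thesis by linarith
    next
      assume "(i,j) \<in> B"
      then have "2 \<le> card {j'. (i, j') \<in> B} \<and> 2 \<le> card {i'. (i', j) \<in> B}" using assms(2) unfolding min_deg2_subgraph_def by blast
      moreover have "card {j'. (i, j') \<in> B} \<le> card {j'. (i, j') \<in> A \<union> B}" using fr by (intro card_mono) auto
      moreover have "card {i'. (i', j) \<in> B} \<le> card {i'. (i', j) \<in> A \<union> B}" using fc by (intro card_mono) auto
      ultimately show ?thesis by linarith
    qed
  qed
  then show ?thesis using Us unfolding min_deg2_subgraph_def by auto
qed

lemma ev_pow: "\<forall>\<^sub>F n in sequentially. 96 * real n powr (1/10) \<le> real n powr (1/3)"
  by real_asymp




theorem lemma2p3:
  "\<exists>c1 > (0::real).
     (\<forall>g :: nat \<Rightarrow> real. g \<in> o(\<lambda>n. real n powr (1/3)) \<longrightarrow>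
        (\<forall>\<^sub>F n in sequentially. \<forall>m d1 d2 H.
           biregular_graphs n m d1 d2 \<noteq> {} \<and> n * d1 = m * d2 \<and> d2 \<le> d1 \<and>
           real d1 \<le> real n powr (1/3) \<and>
           min_deg2_subgraph n m H \<and> real (card H) \<le> g n \<longrightarrow>
           measure_pmf.prob (random_biregular n m d1 d2) {G. H \<subseteq> G}
             \<le> c1 * sqrt ((real d1 - 1) * (real d2 - 1) / (real n * real m)) ^ card H)) \<and>
     (\<forall>\<^sub>F n in sequentially. \<forall>m d1 d2 k \<alpha>.
           biregular_graphs n m d1 d2 \<noteq> {} \<and> n * d1 = m * d2 \<and> d2 \<le> d1 \<and>
           real d1 \<le> real n powr (1/3) \<and>
           bip_cycle n m k \<alpha> \<and> real k \<le> real n powr (1/10) \<longrightarrow>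
           measure_pmf.prob (random_biregular n m d1 d2) {G. \<alpha> \<subseteq> G}
             \<le> c1 * ((real d1 - 1) * (real d2 - 1) / (real n * real m)) ^ k) \<and>
     (\<forall>\<^sub>F n in sequentially. \<forall>m d1 d2 k j \<alpha> \<beta>.
           biregular_graphs n m d1 d2 \<noteq> {} \<and> n * d1 = m * d2 \<and> d2 \<le> d1 \<and>
           real d1 \<le> real n powr (1/3) \<and>
           bip_cycle n m k \<alpha> \<and> real k \<le> real n powr (1/10) \<and>
           bip_cycle n m j \<beta> \<and> real j \<le> real n powr (1/10) \<longrightarrow>
           measure_pmf.prob (random_biregular n m d1 d2) {G. \<alpha> \<union> \<beta> \<subseteq> G}
             \<le> c1 * sqrt ((real d1 - 1) * (real d2 - 1) / (real n * real m))
                    ^ (2 * (j + k) - card (\<alpha> \<inter> \<beta>)))"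
proof (intro exI[of _ "2::real"] conjI allI impI)
  show "(0::real) < 2" by simp
next
  fix g :: "nat \<Rightarrow> real"
  assume g: "g \<in> o(\<lambda>n. real n powr (1/3))"
  have ev1: "\<forall>\<^sub>F n in sequentially. norm (g n) \<le> (1/24) * norm (real n powr (1/3))"
    using landau_o.smallD[OF g, of "1/24"] by simp
  have ev2: "\<forall>\<^sub>F n in sequentially. (1::nat) \<le> n" by (rule eventually_ge_at_top)
  show "\<forall>\<^sub>F n in sequentially. \<forall>m d1 d2 H.
           biregular_graphs n m d1 d2 \<noteq> {} \<and> n * d1 = m * d2 \<and> d2 \<le> d1 \<and>
           real d1 \<le> real n powr (1/3) \<and>
           min_deg2_subgraph n m H \<and> real (card H) \<le> g n \<longrightarrow>
           measure_pmf.prob (random_biregular n m d1 d2) {G. H \<subseteq> G}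
             \<le> 2 * sqrt ((real d1 - 1) * (real d2 - 1) / (real n * real m)) ^ card H"
    using ev1 ev2
  proof eventually_elim
    case (elim n)
    show ?case
    proof (intro allI impI)
      fix m d1 d2 and H :: "(nat\<times>nat) set"
      assume h: "biregular_graphs n m d1 d2 \<noteq> {} \<and> n * d1 = m * d2 \<and> d2 \<le> d1 \<and>
           real d1 \<le> real n powr (1/3) \<and> min_deg2_subgraph n m H \<and> real (card H) \<le> g n"
      have "real (card H) \<le> norm (g n)" using h by auto
      also have "\<dots> \<le> (1/24) * real n powr (1/3)" using elim(1) by simp
      finally have "24 * real (card H) \<le> real n powr (1/3)" by simp
      then show "measure_pmf.prob (random_biregular n m d1 d2) {G. H \<subseteq> G}
             \<le> 2 * sqrt ((real d1 - 1) * (real d2 - 1) / (real n * real m)) ^ card H"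
        using core[of n m d1 d2 H] h elim(2) by simp
    qed
  qed
next
  show "\<forall>\<^sub>F n in sequentially. \<forall>m d1 d2 k \<alpha>.
           biregular_graphs n m d1 d2 \<noteq> {} \<and> n * d1 = m * d2 \<and> d2 \<le> d1 \<and>
           real d1 \<le> real n powr (1/3) \<and>
           bip_cycle n m k \<alpha> \<and> real k \<le> real n powr (1/10) \<longrightarrow>
           measure_pmf.prob (random_biregular n m d1 d2) {G. \<alpha> \<subseteq> G}
             \<le> 2 * ((real d1 - 1) * (real d2 - 1) / (real n * real m)) ^ k"
    using ev_pow eventually_ge_at_top[of "1::nat"]
  proof eventually_elim
    case (elim n)
    show ?case
    proof (intro allI impI)
      fix m d1 d2 k and \<alpha> :: "(nat\<times>nat) set"
      assume h: "biregular_graphs n m d1 d2 \<noteq> {} \<and> n * d1 = m * d2 \<and> d2 \<le> d1 \<and>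
           real d1 \<le> real n powr (1/3) \<and> bip_cycle n m k \<alpha> \<and> real k \<le> real n powr (1/10)"
      have cp: "min_deg2_subgraph n m \<alpha> \<and> card \<alpha> = 2 * k" using cycle_props h by blast
      have "24 * real (card \<alpha>) = 48 * real k" using cp by simp
      also have "\<dots> \<le> 96 * real n powr (1/10)" using h by simp
      also have "\<dots> \<le> real n powr (1/3)" using elim(1) .
      finally have c: "24 * real (card \<alpha>) \<le> real n powr (1/3)" .
      have x0: "0 \<le> (real d1 - 1) * (real d2 - 1) / (real n * real m)" using x_nonneg elim(2) h by blast
      have "measure_pmf.prob (random_biregular n m d1 d2) {G. \<alpha> \<subseteq> G}
             \<le> 2 * sqrt ((real d1 - 1) * (real d2 - 1) / (real n * real m)) ^ card \<alpha>"
        using core[of n m d1 d2 \<alpha>] h elim(2) cp c by simp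
      also have "sqrt ((real d1 - 1) * (real d2 - 1) / (real n * real m)) ^ card \<alpha>
          = ((real d1 - 1) * (real d2 - 1) / (real n * real m)) ^ k"
        using cp x0 by (simp add: power_mult)
      finally show "measure_pmf.prob (random_biregular n m d1 d2) {G. \<alpha> \<subseteq> G}
             \<le> 2 * ((real d1 - 1) * (real d2 - 1) / (real n * real m)) ^ k" .
    qed
  qed
next
  show "\<forall>\<^sub>F n in sequentially. \<forall>m d1 d2 k j \<alpha> \<beta>.
           biregular_graphs n m d1 d2 \<noteq> {} \<and> n * d1 = m * d2 \<and> d2 \<le> d1 \<and>
           real d1 \<le> real n powr (1/3) \<and>
           bip_cycle n m k \<alpha> \<and> real k \<le> real n powr (1/10) \<and>
           bip_cycle n m j \<beta> \<and> real j \<le> real n powr (1/10) \<longrightarrow>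
           measure_pmf.prob (random_biregular n m d1 d2) {G. \<alpha> \<union> \<beta> \<subseteq> G}
             \<le> 2 * sqrt ((real d1 - 1) * (real d2 - 1) / (real n * real m))
                    ^ (2 * (j + k) - card (\<alpha> \<inter> \<beta>))"
    using ev_pow eventually_ge_at_top[of "1::nat"]
  proof eventually_elim
    case (elim n)
    show ?case
    proof (intro allI impI)
      fix m d1 d2 k j and \<alpha> \<beta> :: "(nat\<times>nat) set"
      assume h: "biregular_graphs n m d1 d2 \<noteq> {} \<and> n * d1 = m * d2 \<and> d2 \<le> d1 \<and>
           real d1 \<le> real n powr (1/3) \<and> bip_cycle n m k \<alpha> \<and> real k \<le> real n powr (1/10) \<and>
           bip_cycle n m j \<beta> \<and> real j \<le> real n powr (1/10)"
      have ca: "min_deg2_subgraph n m \<alpha> \<and> card \<alpha> = 2 * k" using cycle_props h by blast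
      have cb: "min_deg2_subgraph n m \<beta> \<and> card \<beta> = 2 * j" using cycle_props h by blast
      have md: "min_deg2_subgraph n m (\<alpha> \<union> \<beta>)" using union_md ca cb by blast
      have fa: "finite \<alpha>" using ca unfolding min_deg2_subgraph_def by (meson finite_SigmaI finite_atLeastAtMost finite_subset)
      have fb: "finite \<beta>" using cb unfolding min_deg2_subgraph_def by (meson finite_SigmaI finite_atLeastAtMost finite_subset)
      have cu: "card (\<alpha> \<union> \<beta>) + card (\<alpha> \<inter> \<beta>) = card \<alpha> + card \<beta>" using card_Un_Int[OF fa fb] by simp
      then have cu2: "card (\<alpha> \<union> \<beta>) = 2 * (j + k) - card (\<alpha> \<inter> \<beta>)" using ca cb by simp
      have "real (card (\<alpha> \<union> \<beta>)) \<le> 2 * real k + 2 * real j" using cu ca cb by simp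
      then have "24 * real (card (\<alpha> \<union> \<beta>)) \<le> 48 * real k + 48 * real j" by simp
      also have "\<dots> \<le> 96 * real n powr (1/10)" using h by simp
      also have "\<dots> \<le> real n powr (1/3)" using elim(1) .
      finally have c: "24 * real (card (\<alpha> \<union> \<beta>)) \<le> real n powr (1/3)" .
      show "measure_pmf.prob (random_biregular n m d1 d2) {G. \<alpha> \<union> \<beta> \<subseteq> G}
             \<le> 2 * sqrt ((real d1 - 1) * (real d2 - 1) / (real n * real m))
                    ^ (2 * (j + k) - card (\<alpha> \<inter> \<beta>))"
        using core[of n m d1 d2 "\<alpha> \<union> \<beta>"] h elim(2) md c cu2 by simp
    qed
  qed
qed


end
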